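(* Let $B$ be a standard Brownian motion. For every $a>2$ and $b<1/2$ there is a constant $c$ such that for all $y\ge0$, $$P\Big(\sup_{t>0}\Big(\frac{B(t)^2}{t}-a\log(1+|\log t|)\Big)>y\Big)\le ce^{-by}.$$ *)

theory Defs
  imports "HOL-Probability.Probability"
begin

definition standard_brownian_motion :: "'a measure \<Rightarrow> (real \<Rightarrow> 'a \<Rightarrow> real) \<Rightarrow> bool" where
  "standard_brownian_motion M B \<longleftrightarrow>
     prob_space M \<and>
     (\<forall>t. B t \<in> borel_measurable M) \<and>
     (\<forall>\<omega>\<in>space M. B 0 \<omega> = 0) \<and>
     (\<forall>\<omega>\<in>space M. continuous_on {0..} (\<lambda>t. B t \<omega>)) \<and>
     (\<forall>s t. 0 \<le> s \<and> s < t \<longrightarrow>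
        distributed M lborel (\<lambda>\<omega>. B t \<omega> - B s \<omega>)
          (\<lambda>x. ennreal (normal_density 0 (sqrt (t - s)) x))) \<and>
     (\<forall>(n::nat) (u::nat \<Rightarrow> real). 0 \<le> u 0 \<and> (\<forall>i<n. u i < u (Suc i)) \<longrightarrow>
        prob_space.indep_vars M (\<lambda>_. borel) (\<lambda>i \<omega>. B (u (Suc i)) \<omega> - B (u i) \<omega>) {..<n})"

end

theory Submission
  imports Defs
begin


lemma normal_density_exp_shift:
  fixes \<sigma> \<theta> x :: real
  assumes "\<sigma> > 0" "0 \<le> \<theta>" "\<theta> < 1/2"
  shows "exp (\<theta> * x\<^sup>2 / \<sigma>\<^sup>2) * normal_density 0 \<sigma> x
       = normal_density 0 (\<sigma> / sqrt (1 - 2*\<theta>)) x / sqrt (1 - 2*\<theta>)"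
proof -
  have p: "1 - 2*\<theta> > 0" using assms by simp
  have "normal_density 0 (\<sigma> / sqrt (1 - 2*\<theta>)) x
      = sqrt (1 - 2*\<theta>) / sqrt (2*pi*\<sigma>\<^sup>2) * exp (-x\<^sup>2 * (1 - 2*\<theta>) / (2*\<sigma>\<^sup>2))"
    using p assms by (simp add: normal_density_def power_divide real_sqrt_divide real_sqrt_mult field_simps)
  moreover have "exp (-x\<^sup>2 * (1 - 2*\<theta>) / (2*\<sigma>\<^sup>2)) = exp (\<theta> * x\<^sup>2 / \<sigma>\<^sup>2) * exp (-x\<^sup>2/(2*\<sigma>\<^sup>2))"
    using assms by (simp add: exp_add[symmetric] field_simps)
  ultimately show ?thesis using p assms
    by (simp add: normal_density_def)
qed

lemma (in prob_space) normal_tail: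
  assumes D: "distributed M lborel Y (\<lambda>x. ennreal (normal_density 0 \<sigma> x))"
    and "\<sigma> > 0" "0 \<le> \<theta>" "\<theta> < 1/2"
  shows "prob {\<omega>\<in>space M. (Y \<omega>)\<^sup>2 > \<sigma>\<^sup>2 * z} \<le> exp (-\<theta>*z) / sqrt (1 - 2*\<theta>)"
proof -
  have p: "1 - 2*\<theta> > 0" using assms by simp
  let ?S = "{x::real. x\<^sup>2 > \<sigma>\<^sup>2 * z}"
  have Sm: "?S \<in> sets lborel" by measurable
  have eq: "{\<omega>\<in>space M. (Y \<omega>)\<^sup>2 > \<sigma>\<^sup>2 * z} = Y -` ?S \<inter> space M" by auto
  have "emeasure M (Y -` ?S \<inter> space M) = (\<integral>\<^sup>+x. ennreal (normal_density 0 \<sigma> x) * indicator ?S x \<partial>lborel)"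
    using distributed_emeasure[OF D Sm] .
  also have "\<dots> \<le> (\<integral>\<^sup>+x. ennreal (exp (-\<theta>*z) / sqrt (1 - 2*\<theta>) * normal_density 0 (\<sigma> / sqrt (1 - 2*\<theta>)) x) \<partial>lborel)"
  proof (rule nn_integral_mono)
    fix x :: real
    have "indicator ?S x * normal_density 0 \<sigma> x \<le> exp (\<theta> * (x\<^sup>2/\<sigma>\<^sup>2 - z)) * normal_density 0 \<sigma> x"
    proof (cases "x \<in> ?S")
      case True
      then have "x\<^sup>2/\<sigma>\<^sup>2 - z > 0" using assms by (simp add: field_simps)
      then have "exp (\<theta> * (x\<^sup>2/\<sigma>\<^sup>2 - z)) \<ge> 1" using assms by simp
      then show ?thesis using True mult_right_mono[of 1 "exp (\<theta> * (x\<^sup>2/\<sigma>\<^sup>2 - z))" "normal_density 0 \<sigma> x"] by simp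
    qed simp
    also have "\<dots> = exp (-\<theta>*z) * (exp (\<theta> * x\<^sup>2 / \<sigma>\<^sup>2) * normal_density 0 \<sigma> x)"
      by (simp add: exp_add[symmetric] algebra_simps)
    also have "\<dots> = exp (-\<theta>*z) / sqrt (1 - 2*\<theta>) * normal_density 0 (\<sigma> / sqrt (1 - 2*\<theta>)) x"
      using normal_density_exp_shift[OF assms(2-4), of x] by simp
    finally show "ennreal (normal_density 0 \<sigma> x) * indicator ?S x \<le> ennreal (exp (-\<theta>*z) / sqrt (1 - 2*\<theta>) * normal_density 0 (\<sigma> / sqrt (1 - 2*\<theta>)) x)"
      by (auto simp: indicator_def intro: ennreal_leI)
  qed
  also have "\<dots> = ennreal (exp (-\<theta>*z) / sqrt (1 - 2*\<theta>)) * (\<integral>\<^sup>+x. ennreal (normal_density 0 (\<sigma> / sqrt (1 - 2*\<theta>)) x) \<partial>lborel)"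
    using p by (subst nn_integral_cmult[symmetric]) (auto intro!: nn_integral_cong simp: ennreal_mult'[symmetric])
  also have "(\<integral>\<^sup>+x. ennreal (normal_density 0 (\<sigma> / sqrt (1 - 2*\<theta>)) x) \<partial>lborel) = 1"
    using integral_normal_density[of 0 "\<sigma> / sqrt (1 - 2*\<theta>)"]
    using p assms(2) by (subst nn_integral_eq_integral) (auto intro!: integrable_normal_density)
  finally have "emeasure M (Y -` ?S \<inter> space M) \<le> ennreal (exp (-\<theta>*z) / sqrt (1 - 2*\<theta>))" by simp
  then show ?thesis unfolding eq
    using p by (simp add: emeasure_eq_measure)
qed

lemma (in prob_space) normal_half:
  assumes D: "distributed M lborel Y (\<lambda>x. ennreal (normal_density 0 \<sigma> x))" and s: "\<sigma> > 0"
  shows "prob {\<omega>\<in>space M. Y \<omega> \<ge> 0} \<ge> 1/2" "prob {\<omega>\<in>space M. Y \<omega> \<le> 0} \<ge> 1/2"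
proof -
  have D': "distributed M lborel (\<lambda>x. - Y x) (\<lambda>x. ennreal (normal_density 0 \<sigma> x))"
    using normal_density_affine[OF D s, of "-1" 0] by simp
  have m: "{0::real..} \<in> sets lborel" by simp
  have e1: "{\<omega>\<in>space M. Y \<omega> \<ge> 0} = Y -` {0..} \<inter> space M" by auto
  have e2: "{\<omega>\<in>space M. Y \<omega> \<le> 0} = (\<lambda>x. - Y x) -` {0..} \<inter> space M" by auto
  have "emeasure M {\<omega>\<in>space M. Y \<omega> \<ge> 0} = emeasure M {\<omega>\<in>space M. Y \<omega> \<le> 0}"
    unfolding e1 e2 distributed_emeasure[OF D m] distributed_emeasure[OF D' m] ..
  then have eq: "prob {\<omega>\<in>space M. Y \<omega> \<ge> 0} = prob {\<omega>\<in>space M. Y \<omega> \<le> 0}"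
    by (simp add: measure_def)
  have Ym: "Y \<in> borel_measurable M" using D by (auto dest: distributed_measurable)
  have "1 = prob ({\<omega>\<in>space M. Y \<omega> \<ge> 0} \<union> {\<omega>\<in>space M. Y \<omega> \<le> 0})"
    by (subst prob_space[symmetric]) (auto intro!: arg_cong[where f=prob])
  also have "\<dots> \<le> prob {\<omega>\<in>space M. Y \<omega> \<ge> 0} + prob {\<omega>\<in>space M. Y \<omega> \<le> 0}"
    using Ym by (intro measure_Un_le) auto
  finally show "prob {\<omega>\<in>space M. Y \<omega> \<ge> 0} \<ge> 1/2" "prob {\<omega>\<in>space M. Y \<omega> \<le> 0} \<ge> 1/2"
    using eq by auto
qed



lemma (in prob_space) levy_indep:
  fixes X :: "nat \<Rightarrow> 'a \<Rightarrow> real" and g :: "(nat \<Rightarrow> real) \<Rightarrow> bool"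
  assumes ind: "indep_vars (\<lambda>_. borel) X {..<N}" and k: "k < N"
    and g: "g \<in> measurable (PiM {..<k} (\<lambda>_. borel)) (count_space UNIV)" and R: "R \<in> sets borel"
  shows "prob {\<omega>\<in>space M. g (\<lambda>i\<in>{..<k}. X i \<omega>) \<and> (\<Sum>i\<in>{k..<N}. X i \<omega>) \<in> R}
       = prob {\<omega>\<in>space M. g (\<lambda>i\<in>{..<k}. X i \<omega>)} * prob {\<omega>\<in>space M. (\<Sum>i\<in>{k..<N}. X i \<omega>) \<in> R}"
proof -
  have iv: "indep_var (PiM {..<k} (\<lambda>_. borel)) (\<lambda>\<omega>. \<lambda>i\<in>{..<k}. X i \<omega>) (PiM {k..<N} (\<lambda>_. borel)) (\<lambda>\<omega>. \<lambda>i\<in>{k..<N}. X i \<omega>)"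
    using k by (intro indep_var_restrict[OF ind]) (auto simp: not_less[symmetric])
  have f: "(\<lambda>y. \<Sum>i\<in>{k..<N}. y i) \<in> borel_measurable (PiM {k..<N} (\<lambda>_. borel::real measure))"
    by (intro borel_measurable_sum measurable_component_singleton)
  let ?Xa = "{y\<in>space (PiM {..<k} (\<lambda>_. borel::real measure)). g y}"
  let ?Xb = "{y\<in>space (PiM {k..<N} (\<lambda>_. borel::real measure)). (\<Sum>i\<in>{k..<N}. y i) \<in> R}"
  have Xa: "?Xa \<in> sets (PiM {..<k} (\<lambda>_. borel))" using g by (rule predE)
  have Xb: "?Xb \<in> sets (PiM {k..<N} (\<lambda>_. borel))"
    using measurable_sets[OF f R] by (simp add: vimage_def Int_def conj_commute)
  have "prob ((\<lambda>x. ((\<lambda>i\<in>{..<k}. X i x), (\<lambda>i\<in>{k..<N}. X i x))) -` (?Xa \<times> ?Xb) \<inter> space M) =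
    prob ((\<lambda>\<omega>. \<lambda>i\<in>{..<k}. X i \<omega>) -` ?Xa \<inter> space M) * prob ((\<lambda>\<omega>. \<lambda>i\<in>{k..<N}. X i \<omega>) -` ?Xb \<inter> space M)"
    by (rule indep_varD[OF iv Xa Xb])
  moreover have "(\<lambda>x. ((\<lambda>i\<in>{..<k}. X i x), (\<lambda>i\<in>{k..<N}. X i x))) -` (?Xa \<times> ?Xb) \<inter> space M
     = {\<omega>\<in>space M. g (\<lambda>i\<in>{..<k}. X i \<omega>) \<and> (\<Sum>i\<in>{k..<N}. X i \<omega>) \<in> R}"
    by (auto simp: space_PiM)
  moreover have "(\<lambda>\<omega>. \<lambda>i\<in>{..<k}. X i \<omega>) -` ?Xa \<inter> space M = {\<omega>\<in>space M. g (\<lambda>i\<in>{..<k}. X i \<omega>)}"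
    by (auto simp: space_PiM)
  moreover have "(\<lambda>\<omega>. \<lambda>i\<in>{k..<N}. X i \<omega>) -` ?Xb \<inter> space M = {\<omega>\<in>space M. (\<Sum>i\<in>{k..<N}. X i \<omega>) \<in> R}"
    by (auto simp: space_PiM)
  ultimately show ?thesis by simp
qed



lemma sumPi_meas:
  "j \<le> k \<Longrightarrow> (\<lambda>y. \<Sum>i<j. y i) \<in> borel_measurable (PiM {..<k::nat} (\<lambda>_. borel::real measure))"
  by (intro borel_measurable_sum measurable_component_singleton) auto

lemma gP_meas:
  fixes x :: real and P :: "real \<Rightarrow> bool"
  assumes PM: "{r. P r} \<in> sets borel"
  shows "(\<lambda>y. \<bar>\<Sum>i<k. y i\<bar> > x \<and> (\<forall>j\<in>{..<k}. \<bar>\<Sum>i<j. y i\<bar> \<le> x) \<and> P (\<Sum>i<k. y i))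
    \<in> measurable (PiM {..<k::nat} (\<lambda>_. borel::real measure)) (count_space UNIV)"
proof (intro pred_intros_logic(3) pred_intros_finite(3))
  have [measurable]: "(\<lambda>y. \<Sum>i<k. y i) \<in> borel_measurable (PiM {..<k::nat} (\<lambda>_. borel::real measure))"
    by (rule sumPi_meas) simp
  have [measurable]: "P \<in> measurable borel (count_space UNIV)"
    using PM by (simp add: pred_def)
  show "(\<lambda>y. \<bar>\<Sum>i<k. y i\<bar> > x) \<in> measurable (PiM {..<k::nat} (\<lambda>_. borel::real measure)) (count_space UNIV)" by measurable
  show "(\<lambda>y. P (\<Sum>i<k. y i)) \<in> measurable (PiM {..<k::nat} (\<lambda>_. borel::real measure)) (count_space UNIV)" by measurable
  show "finite {..<k}" by simp
  fix j assume "j \<in> {..<k}"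
  then have [measurable]: "(\<lambda>y. \<Sum>i<j. y i) \<in> borel_measurable (PiM {..<k::nat} (\<lambda>_. borel::real measure))"
    by (intro sumPi_meas) simp
  show "(\<lambda>y. \<bar>\<Sum>i<j. y i\<bar> \<le> x) \<in> measurable (PiM {..<k::nat} (\<lambda>_. borel::real measure)) (count_space UNIV)" by measurable
qed


lemma (in prob_space) levy_ineq:
  fixes X :: "nat \<Rightarrow> 'a \<Rightarrow> real" and x :: real
  assumes ind: "indep_vars (\<lambda>_. borel) X {..<N}"
    and h1: "\<And>k. k < N \<Longrightarrow> prob {\<omega>\<in>space M. (\<Sum>i\<in>{k..<N}. X i \<omega>) \<ge> 0} \<ge> 1/2"
    and h2: "\<And>k. k < N \<Longrightarrow> prob {\<omega>\<in>space M. (\<Sum>i\<in>{k..<N}. X i \<omega>) \<le> 0} \<ge> 1/2"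
  shows "prob {\<omega>\<in>space M. \<exists>k\<le>N. \<bar>\<Sum>i<k. X i \<omega>\<bar> > x} \<le> 2 * prob {\<omega>\<in>space M. \<bar>\<Sum>i<N. X i \<omega>\<bar> > x}"
proof -
  have Xm: "\<And>i. i < N \<Longrightarrow> X i \<in> borel_measurable M" using ind unfolding indep_vars_def by auto
  have SNm: "(\<lambda>\<omega>. \<Sum>i<N. X i \<omega>) \<in> borel_measurable M"
    by (intro borel_measurable_sum Xm) auto
  have Dm: "\<And>k. (\<lambda>\<omega>. \<Sum>i\<in>{k..<N}. X i \<omega>) \<in> borel_measurable M"
    by (intro borel_measurable_sum Xm) auto
  define V where "V k \<omega> = (\<lambda>i\<in>{..<k}. X i \<omega>)" for k \<omega>
  define G where "G P k y = (\<bar>\<Sum>i<k. y i\<bar> > x \<and> (\<forall>j\<in>{..<k}. \<bar>\<Sum>i<j. y i\<bar> \<le> x) \<and> P (\<Sum>i<k. (y::nat\<Rightarrow>real) i))"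
    for P :: "real \<Rightarrow> bool" and k y
  have Geq: "G P k (V k \<omega>) = (\<bar>\<Sum>i<k. X i \<omega>\<bar> > x \<and> (\<forall>j\<in>{..<k}. \<bar>\<Sum>i<j. X i \<omega>\<bar> \<le> x) \<and> P (\<Sum>i<k. X i \<omega>))"
    for P k \<omega>
  proof -
    have "\<And>j. j \<le> k \<Longrightarrow> (\<Sum>i<j. V k \<omega> i) = (\<Sum>i<j. X i \<omega>)"
      unfolding V_def by (intro sum.cong) auto
    then show ?thesis unfolding G_def by auto
  qed
  have Gm: "G P k \<in> measurable (PiM {..<k} (\<lambda>_. borel)) (count_space UNIV)"
    if "{r. P r} \<in> sets borel" for P k
    unfolding G_def by (rule gP_meas[OF that])
  have Vm: "V k \<in> measurable M (PiM {..<k} (\<lambda>_. borel))" if "k \<le> N" for k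
    unfolding V_def using that by (intro measurable_restrict Xm) auto
  define E where "E P k = {\<omega>\<in>space M. G P k (V k \<omega>)}" for P k
  define F where "F P R k = {\<omega>\<in>space M. G P k (V k \<omega>) \<and> (\<Sum>i\<in>{k..<N}. X i \<omega>) \<in> R}" for P R k
  have Esets: "E P k \<in> sets M" if "{r. P r} \<in> sets borel" "k \<le> N" for P k
    unfolding E_def using measurable_compose[OF Vm[OF that(2)] Gm[OF that(1)]] by (rule predE)
  have Fsets: "F P R k \<in> sets M" if "{r. P r} \<in> sets borel" "k \<le> N" "R \<in> sets borel" for P R k
  proof -
    have "F P R k = E P k \<inter> ((\<lambda>\<omega>. \<Sum>i\<in>{k..<N}. X i \<omega>) -` R \<inter> space M)"
      unfolding E_def F_def by auto
    then show ?thesis using Esets[OF that(1,2)] measurable_sets[OF Dm that(3)] by auto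
  qed
  have b1: "{r::real. True} \<in> sets borel" "{r::real. 0 \<le> r} \<in> sets borel" "{r::real. r < 0} \<in> sets borel"
    by auto
  define A where "A k = E (\<lambda>_. True) k" for k
  define C where "C k = F (\<lambda>r. 0 \<le> r) {0..} k \<union> F (\<lambda>r. r < 0) {..0} k" for k
  have Asets: "A k \<in> sets M" if "k \<le> N" for k unfolding A_def using Esets b1 that by auto
  have Csets: "C k \<in> sets M" if "k \<le> N" for k unfolding C_def using Fsets b1 that by auto
  have CA: "C k \<subseteq> A k" for k unfolding C_def A_def F_def E_def G_def by auto
  have Ttarget: "C k \<subseteq> {\<omega>\<in>space M. \<bar>\<Sum>i<N. X i \<omega>\<bar> > x}" if "k \<le> N" for k
  proof
    fix \<omega> assume "\<omega> \<in> C k"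
    moreover have "(\<Sum>i<N. X i \<omega>) = (\<Sum>i<k. X i \<omega>) + (\<Sum>i\<in>{k..<N}. X i \<omega>)"
      using that by (simp add: lessThan_atLeast0 sum.atLeastLessThan_concat)
    ultimately show "\<omega> \<in> {\<omega>\<in>space M. \<bar>\<Sum>i<N. X i \<omega>\<bar> > x}"
      unfolding C_def F_def Geq by auto
  qed
  have disjA: "disjoint_family_on A {..N}"
    unfolding disjoint_family_on_def A_def E_def Geq
  proof (intro ballI impI set_eqI iffI)
    fix m n \<omega> assume mn: "m \<in> {..N}" "n \<in> {..N}" "m \<noteq> n"
      and w: "\<omega> \<in> {\<omega> \<in> space M. x < \<bar>\<Sum>i<m. X i \<omega>\<bar> \<and> (\<forall>j\<in>{..<m}. \<bar>\<Sum>i<j. X i \<omega>\<bar> \<le> x) \<and> True} \<inter>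
          {\<omega> \<in> space M. x < \<bar>\<Sum>i<n. X i \<omega>\<bar> \<and> (\<forall>j\<in>{..<n}. \<bar>\<Sum>i<j. X i \<omega>\<bar> \<le> x) \<and> True}"
    show "\<omega> \<in> {}"
    proof (cases "m < n")
      case True then show ?thesis using w by force
    next
      case False then have "n < m" using mn by simp
      then show ?thesis using w by force
    qed
  qed auto
  have disjC: "disjoint_family_on C {..N}"
    using disjA CA unfolding disjoint_family_on_def by blast
  have AC: "prob (A k) \<le> 2 * prob (C k)" if "k \<le> N" for k
  proof -
    have e1: "prob (A k) = prob (E (\<lambda>r. 0 \<le> r) k) + prob (E (\<lambda>r. r < 0) k)"
    proof -
      have "A k = E (\<lambda>r. 0 \<le> r) k \<union> E (\<lambda>r. r < 0) k" unfolding A_def E_def G_def by auto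
      moreover have "E (\<lambda>r. 0 \<le> r) k \<inter> E (\<lambda>r. r < 0) k = {}" unfolding E_def G_def by auto
      ultimately show ?thesis using Esets b1 that by (simp add: finite_measure_Union)
    qed
    have e2: "prob (C k) = prob (F (\<lambda>r. 0 \<le> r) {0..} k) + prob (F (\<lambda>r. r < 0) {..0} k)"
    proof -
      have "F (\<lambda>r. 0 \<le> r) {0..} k \<inter> F (\<lambda>r. r < 0) {..0} k = {}" unfolding F_def G_def by auto
      then show ?thesis unfolding C_def using Fsets b1 that by (simp add: finite_measure_Union)
    qed
    have half: "prob (E P k) \<le> 2 * prob (F P R k)"
      if PR: "{r. P r} \<in> sets borel" "R \<in> sets borel" "0 \<in> R"
        "k < N \<Longrightarrow> prob {\<omega>\<in>space M. (\<Sum>i\<in>{k..<N}. X i \<omega>) \<in> R} \<ge> 1/2" for P R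
    proof (cases "k < N")
      case True
      have "prob (F P R k) = prob (E P k) * prob {\<omega>\<in>space M. (\<Sum>i\<in>{k..<N}. X i \<omega>) \<in> R}"
        unfolding F_def E_def V_def by (rule levy_indep[OF ind True Gm[OF PR(1)] PR(2)])
      also have "\<dots> \<ge> prob (E P k) * (1/2)"
        using PR(4)[OF True] by (intro mult_left_mono) auto
      finally show ?thesis by simp
    next
      case False
      then have "k = N" using \<open>k \<le> N\<close> by simp
      then have "F P R k = E P k" unfolding F_def E_def using PR(3) by auto
      then show ?thesis by simp
    qed
    have "prob (E (\<lambda>r. 0 \<le> r) k) \<le> 2 * prob (F (\<lambda>r. 0 \<le> r) {0..} k)"
      by (rule half) (use h1 in \<open>auto simp: atLeast_def\<close>)
    moreover have "prob (E (\<lambda>r. r < 0) k) \<le> 2 * prob (F (\<lambda>r. r < 0) {..0} k)"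
      by (rule half) (use h2 in \<open>auto simp: atMost_def\<close>)
    ultimately show ?thesis using e1 e2 by simp
  qed
  have ev: "{\<omega>\<in>space M. \<exists>k\<le>N. \<bar>\<Sum>i<k. X i \<omega>\<bar> > x} = (\<Union>k\<in>{..N}. A k)"
  proof (rule set_eqI, rule iffI)
    fix \<omega> assume "\<omega> \<in> {\<omega>\<in>space M. \<exists>k\<le>N. \<bar>\<Sum>i<k. X i \<omega>\<bar> > x}"
    then have sp: "\<omega> \<in> space M" and ex: "\<exists>k. k \<le> N \<and> \<bar>\<Sum>i<k. X i \<omega>\<bar> > x" by auto
    from ex obtain k where k: "k \<le> N \<and> \<bar>\<Sum>i<k. X i \<omega>\<bar> > x"
      and min: "\<forall>j<k. \<not> (j \<le> N \<and> \<bar>\<Sum>i<j. X i \<omega>\<bar> > x)"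
      using exists_least_iff[THEN iffD1, OF ex] by blast
    then show "\<omega> \<in> (\<Union>k\<in>{..N}. A k)"
      using sp unfolding A_def E_def Geq by (auto intro!: bexI[of _ k])
  next
    fix \<omega> assume "\<omega> \<in> (\<Union>k\<in>{..N}. A k)"
    then show "\<omega> \<in> {\<omega>\<in>space M. \<exists>k\<le>N. \<bar>\<Sum>i<k. X i \<omega>\<bar> > x}"
      unfolding A_def E_def Geq by auto
  qed
  have "prob {\<omega>\<in>space M. \<exists>k\<le>N. \<bar>\<Sum>i<k. X i \<omega>\<bar> > x} = (\<Sum>k\<in>{..N}. prob (A k))"
    unfolding ev using Asets disjA by (intro finite_measure_finite_Union) auto
  also have "\<dots> \<le> (\<Sum>k\<in>{..N}. 2 * prob (C k))"
    using AC by (intro sum_mono) auto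
  also have "\<dots> = 2 * prob (\<Union>k\<in>{..N}. C k)"
    using Csets disjC by (subst finite_measure_finite_Union) (auto simp: sum_distrib_left)
  also have "\<dots> \<le> 2 * prob {\<omega>\<in>space M. \<bar>\<Sum>i<N. X i \<omega>\<bar> > x}"
    using Ttarget SNm by (intro mult_left_mono finite_measure_mono) auto
  finally show ?thesis .
qed



lemma BM_grid:
  fixes M :: "'a measure" and B :: "real \<Rightarrow> 'a \<Rightarrow> real"
  assumes bm: "standard_brownian_motion M B" and T: "T > 0" and th: "0 \<le> \<theta>" "\<theta> < 1/2" and z: "z \<ge> 0"
  shows "measure M {\<omega>\<in>space M. \<exists>k\<le>(2::nat)^m. \<bar>B (real k * T / 2^m) \<omega> - B 0 \<omega>\<bar> > sqrt (T*z)}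
     \<le> 2 * (exp (-\<theta>*z) / sqrt (1 - 2*\<theta>))"
proof -
  interpret prob_space M using bm unfolding standard_brownian_motion_def by auto
  define N :: nat where "N = 2^m"
  define u where "u i = real i * T / 2^m" for i :: nat
  have u0: "u 0 = 0" unfolding u_def by simp
  have uN: "u N = T" unfolding u_def N_def by simp
  have umono: "u i < u j" if "i < j" for i j unfolding u_def using T that by (simp add: divide_strict_right_mono)
  define X where "X i \<omega> = B (u (Suc i)) \<omega> - B (u i) \<omega>" for i \<omega>
  have ind: "indep_vars (\<lambda>_. borel) X {..<N}"
    using bm u0 umono unfolding standard_brownian_motion_def X_def by auto
  have dist: "distributed M lborel (\<lambda>\<omega>. B (u j) \<omega> - B (u k) \<omega>) (\<lambda>x. ennreal (normal_density 0 (sqrt (u j - u k)) x))"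
    if "k < j" for j k
  proof -
    have "0 \<le> u k" unfolding u_def using T by simp
    then show ?thesis using bm umono[OF that] unfolding standard_brownian_motion_def by auto
  qed
  have Dsum: "(\<Sum>i\<in>{k..<N}. X i \<omega>) = B (u N) \<omega> - B (u k) \<omega>" if "k \<le> N" for k \<omega>
    unfolding X_def using sum_Suc_diff'[OF that, of "\<lambda>i. B (u i) \<omega>"] by simp
  have Ssum: "(\<Sum>i<k. X i \<omega>) = B (u k) \<omega> - B 0 \<omega>" for k \<omega>
    unfolding X_def using sum_lessThan_telescope[of "\<lambda>i. B (u i) \<omega>" k] u0 by simp
  have pos: "\<And>k. k < N \<Longrightarrow> 0 < u N - u k" using umono by simp
  have lev: "prob {\<omega>\<in>space M. \<exists>k\<le>N. \<bar>\<Sum>i<k. X i \<omega>\<bar> > sqrt (T*z)} \<le> 2 * prob {\<omega>\<in>space M. \<bar>\<Sum>i<N. X i \<omega>\<bar> > sqrt (T*z)}"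
  proof (rule levy_ineq[OF ind])
    fix k assume k: "k < N"
    show "prob {\<omega>\<in>space M. (\<Sum>i\<in>{k..<N}. X i \<omega>) \<ge> 0} \<ge> 1/2"
      using normal_half(1)[OF dist[OF k] real_sqrt_gt_zero[OF pos[OF k]]] k by (simp add: Dsum)
    show "prob {\<omega>\<in>space M. (\<Sum>i\<in>{k..<N}. X i \<omega>) \<le> 0} \<ge> 1/2"
      using normal_half(2)[OF dist[OF k] real_sqrt_gt_zero[OF pos[OF k]]] k by (simp add: Dsum)
  qed
  have N0: "0 < N" unfolding N_def by simp
  have distT: "distributed M lborel (\<lambda>\<omega>. B T \<omega> - B 0 \<omega>) (\<lambda>x. ennreal (normal_density 0 (sqrt T) x))"
    using dist[OF N0] uN u0 by simp
  have eqT: "{\<omega>\<in>space M. \<bar>\<Sum>i<N. X i \<omega>\<bar> > sqrt (T*z)} = {\<omega>\<in>space M. (B T \<omega> - B 0 \<omega>)\<^sup>2 > (sqrt T)\<^sup>2 * z}"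
  proof -
    have "\<bar>y\<bar> > sqrt (T*z) \<longleftrightarrow> y\<^sup>2 > T * z" for y :: real
      using T z by (metis real_sqrt_abs real_sqrt_less_iff)
    then show ?thesis using T by (simp add: Ssum uN)
  qed
  have tail: "prob {\<omega>\<in>space M. (B T \<omega> - B 0 \<omega>)\<^sup>2 > (sqrt T)\<^sup>2 * z} \<le> exp (-\<theta>*z) / sqrt (1 - 2*\<theta>)"
    by (rule normal_tail[OF distT]) (use T th in auto)
  have eqL: "{\<omega>\<in>space M. \<exists>k\<le>(2::nat)^m. \<bar>B (real k * T / 2^m) \<omega> - B 0 \<omega>\<bar> > sqrt (T*z)}
     = {\<omega>\<in>space M. \<exists>k\<le>N. \<bar>\<Sum>i<k. X i \<omega>\<bar> > sqrt (T*z)}"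
    by (simp add: Ssum u_def N_def)
  show ?thesis unfolding eqL using lev eqT tail by simp
qed



lemma grid_approx:
  fixes T s d :: real
  assumes T: "T > 0" and s: "0 \<le> s" "s \<le> T" and d: "d > 0"
  shows "\<exists>m k. k \<le> (2::nat)^m \<and> 0 \<le> real k * T / 2^m \<and> \<bar>real k * T / 2^m - s\<bar> < d"
proof -
  obtain m :: nat where m: "T / d < 2^m" using real_arch_pow[of 2 "T/d"] by auto
  have m': "T / 2^m < d" using m d by (simp add: field_simps)
  define r where "r = s * 2^m / T"
  have r0: "0 \<le> r" and rT: "r \<le> 2^m" unfolding r_def using s T by (auto simp: field_simps)
  define k where "k = nat \<lfloor>r\<rfloor>"
  have kr: "real k \<le> r" "r < real k + 1" unfolding k_def using r0 by linarith+
  have k: "k \<le> 2^m"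
  proof -
    have "real k \<le> 2^m" using kr rT by linarith
    then show ?thesis by (simp add: of_nat_le_iff[symmetric])
  qed
  have t1: "real k * T / 2^m \<le> s" using kr(1) T unfolding r_def by (simp add: field_simps)
  have "s * 2^m = r * T" unfolding r_def using T by simp
  then have "s * 2^m < (real k + 1) * T" using kr(2) T mult_strict_right_mono by metis
  then have "s < (real k + 1) * T / 2^m" by (simp add: pos_less_divide_eq)
  also have "(real k + 1) * T / 2^m = real k * T / 2^m + T / 2^m" by (simp add: distrib_right add_divide_distrib)
  finally have t2: "s - real k * T / 2^m < T / 2^m" by simp
  show ?thesis
    using k t1 t2 m' T by (intro exI[of _ m] exI[of _ k]) auto
qed

lemma BM_H:
  fixes M :: "'a measure" and B :: "real \<Rightarrow> 'a \<Rightarrow> real"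
  assumes bm: "standard_brownian_motion M B" and T: "T > 0" and th: "0 \<le> \<theta>" "\<theta> < 1/2" and z: "z \<ge> 0"
  shows "{\<omega>\<in>space M. \<exists>s\<in>{0..T}. (B s \<omega>)\<^sup>2 > T*z} \<in> sets M"
    "measure M {\<omega>\<in>space M. \<exists>s\<in>{0..T}. (B s \<omega>)\<^sup>2 > T*z} \<le> 2 * (exp (-\<theta>*z) / sqrt (1 - 2*\<theta>))"
proof -
  interpret prob_space M using bm unfolding standard_brownian_motion_def by auto
  have Bm[measurable]: "\<And>t. B t \<in> borel_measurable M" using bm unfolding standard_brownian_motion_def by auto
  have B0: "\<And>\<omega>. \<omega> \<in> space M \<Longrightarrow> B 0 \<omega> = 0" using bm unfolding standard_brownian_motion_def by auto
  have cont: "\<And>\<omega>. \<omega> \<in> space M \<Longrightarrow> continuous_on {0..} (\<lambda>t. B t \<omega>)"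
    using bm unfolding standard_brownian_motion_def by auto
  define x where "x = sqrt (T*z)"
  have sq: "\<bar>y\<bar> > x \<longleftrightarrow> y\<^sup>2 > T * z" for y :: real
    unfolding x_def using T z by (metis real_sqrt_abs real_sqrt_less_iff)
  define E where "E m = {\<omega>\<in>space M. \<exists>k\<le>(2::nat)^m. \<bar>B (real k * T / 2^m) \<omega> - B 0 \<omega>\<bar> > x}" for m :: nat
  have Em: "E m \<in> sets M" for m unfolding E_def by measurable
  have Einc: "incseq E"
  proof (rule incseq_SucI, rule subsetI)
    fix m \<omega> assume "\<omega> \<in> E m"
    then obtain k where k: "k \<le> 2^m" "\<bar>B (real k * T / 2^m) \<omega> - B 0 \<omega>\<bar> > x" and sp: "\<omega> \<in> space M"
      unfolding E_def by auto
    have "real (2*k) * T / 2^Suc m = real k * T / 2^m" by simp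
    then show "\<omega> \<in> E (Suc m)" unfolding E_def using k sp
      by (auto intro!: exI[of _ "2*k"])
  qed
  have Heq: "{\<omega>\<in>space M. \<exists>s\<in>{0..T}. (B s \<omega>)\<^sup>2 > T*z} = (\<Union>m. E m)"
  proof (rule set_eqI, rule iffI)
    fix \<omega> assume "\<omega> \<in> {\<omega>\<in>space M. \<exists>s\<in>{0..T}. (B s \<omega>)\<^sup>2 > T*z}"
    then obtain s where sp: "\<omega> \<in> space M" and s: "0 \<le> s" "s \<le> T" and bs: "\<bar>B s \<omega>\<bar> > x"
      using sq by auto
    have "s \<in> {0..}" using s by simp
    then obtain d where d: "d > 0" and dd: "\<And>t. t \<in> {0..} \<Longrightarrow> dist t s < d \<Longrightarrow> dist (B t \<omega>) (B s \<omega>) < \<bar>B s \<omega>\<bar> - x"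
      using cont[OF sp, unfolded continuous_on_iff] bs by (metis diff_gt_0_iff_gt)
    obtain m k where mk: "k \<le> (2::nat)^m" "0 \<le> real k * T / 2^m" "\<bar>real k * T / 2^m - s\<bar> < d"
      using grid_approx[OF T s d] by blast
    have "dist (B (real k * T / 2^m) \<omega>) (B s \<omega>) < \<bar>B s \<omega>\<bar> - x"
      using dd[of "real k * T / 2^m"] mk by (simp add: dist_real_def)
    then have "\<bar>B (real k * T / 2^m) \<omega> - B 0 \<omega>\<bar> > x" using B0[OF sp] by (simp add: dist_real_def)
    then show "\<omega> \<in> (\<Union>m. E m)" unfolding E_def using mk sp by blast
  next
    fix \<omega> assume "\<omega> \<in> (\<Union>m. E m)"
    then obtain m k where sp: "\<omega> \<in> space M" and k: "k \<le> (2::nat)^m" and b: "\<bar>B (real k * T / 2^m) \<omega> - B 0 \<omega>\<bar> > x"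
      unfolding E_def by auto
    have "real k \<le> 2^m" using k by (metis of_nat_le_iff of_nat_numeral of_nat_power)
    then have "real k * T / 2^m \<le> T" using T by (simp add: field_simps)
    moreover have "0 \<le> real k * T / 2^m" using T by simp
    ultimately show "\<omega> \<in> {\<omega>\<in>space M. \<exists>s\<in>{0..T}. (B s \<omega>)\<^sup>2 > T*z}"
      using sp b B0[OF sp] sq by auto
  qed
  show "{\<omega>\<in>space M. \<exists>s\<in>{0..T}. (B s \<omega>)\<^sup>2 > T*z} \<in> sets M" unfolding Heq using Em by auto
  have lim: "(\<lambda>m. prob (E m)) \<longlonglongrightarrow> prob (\<Union>m. E m)"
    using Em Einc by (intro finite_Lim_measure_incseq) auto
  have bnd: "prob (E m) \<le> 2 * (exp (-\<theta>*z) / sqrt (1 - 2*\<theta>))" for m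
    unfolding E_def x_def by (rule BM_grid[OF bm T th z])
  show "measure M {\<omega>\<in>space M. \<exists>s\<in>{0..T}. (B s \<omega>)\<^sup>2 > T*z} \<le> 2 * (exp (-\<theta>*z) / sqrt (1 - 2*\<theta>))"
    unfolding Heq using lim bnd by (intro LIMSEQ_le_const2[OF lim]) auto
qed



lemma key_real:
  fixes t v q a y :: real
  assumes t: "t > 0" and q: "q > 1" and a: "a \<ge> 0" and y: "y \<ge> 0"
    and h: "v\<^sup>2 / t - a * ln (1 + \<bar>ln t\<bar>) > y"
  shows "\<exists>m::nat. (t \<le> q^(m+1) \<and> v\<^sup>2 > q^(m+1) * ((y + a * ln (1 + real m * ln q)) / q))
              \<or> (t \<le> 1 / q^m \<and> v\<^sup>2 > (1 / q^m) * ((y + a * ln (1 + real m * ln q)) / q))"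
proof -
  define L where "L = ln q"
  have L: "L > 0" unfolding L_def using q by simp
  have qpow: "ln (q^n) = real n * L" for n unfolding L_def by (simp add: ln_realpow)
  have v: "v\<^sup>2 > t * (y + a * ln (1 + \<bar>ln t\<bar>))"
    using h t by (simp add: field_simps)
  have gen: "v\<^sup>2 > t0 * (y + a * ln (1 + real m * L))"
    if "real m * L \<le> \<bar>ln t\<bar>" "0 < t0" "t0 \<le> t" for m t0
  proof -
    have "ln (1 + real m * L) \<le> ln (1 + \<bar>ln t\<bar>)"
      using that L by (subst ln_le_cancel_iff) (auto intro: add_pos_nonneg)
    then have "y + a * ln (1 + real m * L) \<le> y + a * ln (1 + \<bar>ln t\<bar>)"
      using a by (simp add: mult_left_mono)
    moreover have "0 \<le> y + a * ln (1 + real m * L)" using y a L by simp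
    ultimately have "t0 * (y + a * ln (1 + real m * L)) \<le> t * (y + a * ln (1 + \<bar>ln t\<bar>))"
      using that by (intro mult_mono) auto
    then show ?thesis using v by linarith
  qed
  define r where "r = ln t / L"
  show ?thesis
  proof (cases "r \<ge> 0")
    case True
    define m where "m = nat \<lfloor>r\<rfloor>"
    have mr: "real m \<le> r" "r < real m + 1" unfolding m_def using True by linarith+
    have lt: "real m * L \<le> ln t" "ln t < (real m + 1) * L"
      using mr L unfolding r_def by (simp_all add: field_simps)
    have t1: "q^m \<le> t" using lt(1) t q by (subst ln_le_cancel_iff[symmetric]) (auto simp: qpow)
    have "ln t \<le> ln (q^(m+1))" using lt(2) qpow[of "m+1"] by (simp add: add.commute)
    then have t2: "t \<le> q^(m+1)" using t q by (subst (asm) ln_le_cancel_iff) auto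
    have "v\<^sup>2 > q^m * (y + a * ln (1 + real m * L))"
      using gen[of m "q^m"] lt t1 q by auto
    moreover have "q^(m+1) * ((y + a * ln (1 + real m * L)) / q) = q^m * (y + a * ln (1 + real m * L))"
      using q by simp
    ultimately show ?thesis using t2 unfolding L_def by (intro exI[of _ m]) auto
  next
    case False
    define m where "m = nat \<lfloor>-r\<rfloor>"
    have mr: "real m \<le> -r" "-r < real m + 1" unfolding m_def using False by linarith+
    have lt: "ln t \<le> - (real m * L)" "- ((real m + 1) * L) < ln t"
      using mr L unfolding r_def by (simp_all add: field_simps)
    have lneg: "ln t < 0" using False L unfolding r_def by (metis divide_nonneg_pos not_le)
    have "ln (1 / q^(m+1)) \<le> ln t" using lt(2) qpow[of "m+1"] q by (simp add: ln_div add.commute)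
    then have t1: "1 / q^(m+1) \<le> t" using t q by (subst (asm) ln_le_cancel_iff) auto
    have "ln t \<le> ln (1 / q^m)" using lt(1) qpow[of m] q by (simp add: ln_div)
    then have t2: "t \<le> 1 / q^m" using t q by (subst (asm) ln_le_cancel_iff) auto
    have g: "v\<^sup>2 > (1 / q^(m+1)) * (y + a * ln (1 + real m * L))"
      using gen[of m "1 / q^(m+1)"] lt lneg t1 q by auto
    have e: "(1 / q^m) * ((y + a * ln (1 + real m * L)) / q) = (1 / q^(m+1)) * (y + a * ln (1 + real m * L))"
      using q by simp
    have "v\<^sup>2 > (1 / q^m) * ((y + a * ln (1 + real m * L)) / q)" by (subst e) (rule g)
    then show ?thesis using t2 unfolding L_def by blast
  qed
qed



lemma summable_w:
  fixes q p :: real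
  assumes q: "q > 1" and p: "p > 1"
  shows "summable (\<lambda>m::nat. (1 + real m * ln q) powr (-p))"
proof (rule summable_comparison_test'[where N=1])
  have L: "ln q > 0" using q by simp
  show "summable (\<lambda>m::nat. (ln q) powr (-p) * real m powr (-p))"
    using p by (intro summable_mult) (simp add: summable_real_powr_iff)
  fix m :: nat assume m: "m \<ge> 1"
  have "(1 + real m * ln q) powr (-p) \<le> (real m * ln q) powr (-p)"
    using m L p by (intro powr_mono2') auto
  also have "\<dots> = (ln q) powr (-p) * real m powr (-p)"
    using L by (simp add: powr_mult mult.commute)
  finally show "norm ((1 + real m * ln q) powr (-p)) \<le> (ln q) powr (-p) * real m powr (-p)"
    by simp
qed

theorem theoremA1:
  fixes M :: "'a measure" and B :: "real \<Rightarrow> 'a \<Rightarrow> real"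
  assumes "standard_brownian_motion M B"
  shows "\<forall>a b::real. a > 2 \<and> b < 1/2 \<longrightarrow>
    (\<exists>c::real. \<forall>y::real. y \<ge> 0 \<longrightarrow>
      measure M {\<omega>\<in>space M.
         (SUP t\<in>{0<..}. ereal (B t \<omega> ^ 2 / t - a * ln (1 + \<bar>ln t\<bar>))) > ereal y}
      \<le> c * exp (- b * y))"
proof (intro allI impI)
  note bm = assms
  interpret prob_space M using bm unfolding standard_brownian_motion_def by auto
  fix a b :: real assume ab: "a > 2 \<and> b < 1/2"
  show "\<exists>c::real. \<forall>y::real. y \<ge> 0 \<longrightarrow>
      measure M {\<omega>\<in>space M.
         (SUP t\<in>{0<..}. ereal (B t \<omega> ^ 2 / t - a * ln (1 + \<bar>ln t\<bar>))) > ereal y}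
      \<le> c * exp (- b * y)"
  proof (cases "b \<le> 0")
    case True
    show ?thesis
    proof (intro exI[of _ 1] allI impI)
      fix y :: real assume y: "0 \<le> y"
      have "0 \<le> (-b) * y" using True y by (intro mult_nonneg_nonneg) auto
      then have e1: "1 \<le> exp (- b * y)" by simp
      have "measure M {\<omega>\<in>space M.
         (SUP t\<in>{0<..}. ereal (B t \<omega> ^ 2 / t - a * ln (1 + \<bar>ln t\<bar>))) > ereal y} \<le> 1"
        by (rule prob_le_1)
      then show "measure M {\<omega>\<in>space M.
         (SUP t\<in>{0<..}. ereal (B t \<omega> ^ 2 / t - a * ln (1 + \<bar>ln t\<bar>))) > ereal y} \<le> 1 * exp (- b * y)"
        using e1 by linarith
    qed
  next
    case False
    then have b: "b > 0" by simp
    define q where "q = (1 + min (a/2) (1/(2*b)))/2"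
    have ha: "a/2 > 1" using ab by simp
    have hb: "1/(2*b) > 1" using ab b by (simp add: field_simps)
    have q1: "1 < q" unfolding q_def using ha hb by simp
    have q2: "q < a/2" unfolding q_def using ha hb by simp
    have q3: "q < 1/(2*b)" unfolding q_def using ha hb by simp
    have q3': "b*q < 1/2" using q3 b by (simp add: field_simps)
    define mx where "mx = max (b*q) (q/a)"
    define \<theta> where "\<theta> = (mx + 1/2)/2"
    have "q < a * (1/2)" using q2 by simp
    then have qa: "q/a < 1/2" using ab by (simp add: pos_divide_less_eq)
    have mx1: "mx < 1/2" unfolding mx_def using q3' qa by simp
    have mx0: "b*q \<le> mx" "q/a \<le> mx" unfolding mx_def by simp_all
    have bq0: "0 \<le> b*q" using b q1 by simp
    have th0: "0 \<le> \<theta>" unfolding \<theta>_def using mx0 bq0 by (simp add: field_simps)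
    have th1: "\<theta> < 1/2" unfolding \<theta>_def using mx1 by (simp add: field_simps)
    have th2: "b*q \<le> \<theta>" unfolding \<theta>_def using mx0 mx1 by (simp add: field_simps)
    have "mx < \<theta>" unfolding \<theta>_def using mx1 by (simp add: field_simps)
    then have th3: "q/a < \<theta>" by (rule le_less_trans[OF mx0(2)])
    define p where "p = a*\<theta>/q"
    have "q < \<theta> * a" using th3 ab by (simp add: pos_divide_less_eq)
    then have p1: "p > 1" unfolding p_def using q1 by (simp add: mult.commute)
    define K where "K = 1 / sqrt (1 - 2*\<theta>)"
    define w where "w m = (1 + real m * ln q) powr (-p)" for m :: nat
    have sw: "summable w" unfolding w_def by (rule summable_w[OF q1 p1])
    have w0: "w m \<ge> 0" for m unfolding w_def by simp
    define z where "z y m = (y + a * ln (1 + real m * ln q)) / q" for y and m :: nat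
    define H where "H T zz = {\<omega>\<in>space M. \<exists>s\<in>{0..T}. (B s \<omega>)\<^sup>2 > T*zz}" for T zz
    have Hs: "H T zz \<in> sets M" if "T > 0" "zz \<ge> 0" for T zz
      unfolding H_def by (rule BM_H(1)[OF bm that(1) th0 th1 that(2)])
    have Hb: "measure M (H T zz) \<le> 2 * (exp (-\<theta>*zz) * K)" if "T > 0" "zz \<ge> 0" for T zz
      unfolding H_def K_def using BM_H(2)[OF bm that(1) th0 th1 that(2)] by simp
    show ?thesis
    proof (intro exI[of _ "4 * K * suminf w"] allI impI)
      fix y :: real assume y: "0 \<le> y"
      define U where "U m = H (q^(m+1)) (z y m) \<union> H (1/q^m) (z y m)" for m
      have lnpos: "0 \<le> ln (1 + real m * ln q)" for m using q1 by simp
      have zpos: "z y m \<ge> 0" for m unfolding z_def using y ab q1 lnpos[of m] by simp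
      have qp: "q^(m+1) > 0" "1/q^m > 0" for m using q1 by simp_all
      have Us: "U m \<in> sets M" for m unfolding U_def using Hs[OF qp(1) zpos] Hs[OF qp(2) zpos] by auto
      have expz: "exp (-\<theta> * z y m) \<le> exp (-b*y) * w m" for m
      proof -
        have "exp (-\<theta> * z y m) = exp (-(\<theta>/q) * y) * exp (-p * ln (1 + real m * ln q))"
          unfolding z_def p_def using q1 by (simp add: exp_add[symmetric] field_simps)
        also have "exp (-p * ln (1 + real m * ln q)) = w m"
        proof -
          have "0 \<le> real m * ln q" using q1 by simp
          then have "1 + real m * ln q > 0" by linarith
          then show ?thesis unfolding w_def powr_def by simp
        qed
        also have "exp (-(\<theta>/q) * y) \<le> exp (-b*y)"
        proof -
          have "b \<le> \<theta>/q" using th2 q1 by (simp add: field_simps)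
          then have "b * y \<le> (\<theta>/q) * y" using y by (rule mult_right_mono)
          then show ?thesis by simp
        qed
        finally show ?thesis using w0[of m] by (simp add: mult_right_mono)
      qed
      have K0: "K \<ge> 0" unfolding K_def using th1 by simp
      have Ub: "measure M (U m) \<le> 4 * K * exp (-b*y) * w m" for m
      proof -
        have "measure M (U m) \<le> measure M (H (q^(m+1)) (z y m)) + measure M (H (1/q^m) (z y m))"
          unfolding U_def using Hs[OF qp(1) zpos] Hs[OF qp(2) zpos] by (rule measure_Un_le)
        also have "\<dots> \<le> 2 * (exp (-\<theta>*z y m) * K) + 2 * (exp (-\<theta>*z y m) * K)"
          using Hb[OF qp(1)[of m] zpos[of m]] Hb[OF qp(2)[of m] zpos[of m]] by linarith
        also have "\<dots> = 4 * K * exp (-\<theta>*z y m)" by simp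
        also have "\<dots> \<le> 4 * K * (exp (-b*y) * w m)"
          using expz[of m] K0 by (intro mult_left_mono) auto
        finally show ?thesis by simp
      qed
      have sb: "summable (\<lambda>m. 4 * K * exp (-b*y) * w m)" using sw by (intro summable_mult)
      have sU: "summable (\<lambda>m. measure M (U m))"
        by (rule summable_comparison_test'[OF sb, where N=0]) (use Ub in auto)
      let ?Y = "{\<omega>\<in>space M. (SUP t\<in>{0<..}. ereal (B t \<omega> ^ 2 / t - a * ln (1 + \<bar>ln t\<bar>))) > ereal y}"
      have incl: "?Y \<subseteq> (\<Union>m. U m)"
      proof
        fix \<omega> assume "\<omega> \<in> ?Y"
        then have sp: "\<omega> \<in> space M" and "ereal y < (SUP t\<in>{0<..}. ereal (B t \<omega> ^ 2 / t - a * ln (1 + \<bar>ln t\<bar>)))"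
          by auto
        then obtain t where t: "t > 0" and ft: "y < B t \<omega> ^ 2 / t - a * ln (1 + \<bar>ln t\<bar>)"
          by (auto simp: less_SUP_iff)
        obtain m where "(t \<le> q^(m+1) \<and> (B t \<omega>)\<^sup>2 > q^(m+1) * z y m)
              \<or> (t \<le> 1 / q^m \<and> (B t \<omega>)\<^sup>2 > (1 / q^m) * z y m)"
          using key_real[OF t q1 _ y ft] ab unfolding z_def by auto
        then have "\<omega> \<in> U m" unfolding U_def H_def using sp t by auto
        then show "\<omega> \<in> (\<Union>m. U m)" by auto
      qed
      have "measure M ?Y \<le> measure M (\<Union>m. U m)"
      proof (cases "?Y \<in> sets M")
        case True then show ?thesis using incl Us by (intro finite_measure_mono) auto
      next
        case False then show ?thesis by (simp add: measure_notin_sets)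
      qed
      also have "\<dots> \<le> (\<Sum>m. measure M (U m))"
        using Us sU by (intro finite_measure_subadditive_countably) auto
      also have "\<dots> \<le> (\<Sum>m. 4 * K * exp (-b*y) * w m)"
        using sU sb Ub by (intro suminf_le) auto
      also have "\<dots> = 4 * K * exp (-b*y) * suminf w"
        using sw by (rule suminf_mult)
      finally show "measure M ?Y \<le> 4 * K * suminf w * exp (- b * y)" by (simp add: ac_simps)
    qed
  qed
qed


end
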